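(* Let $n\ge 2$ and $k\in\{0,1,\dots,n-1\}$. The diagonalizable matrices (those similar to a diagonal matrix) contained in $(\mathbb{C}^{n\times n})_k$ form a Zariski dense subset of $(\mathbb{C}^{n\times n})_k$.
   Context: $(\mathbb{C}^{n\times n})_k=\{A\in\mathbb{C}^{n\times n}\mid \deg(m_A)\le n-k\}$, where $m_A$ is the minimal polynomial of $A$. *)

theory Defs
  imports "Jordan_Normal_Form.Matrix" "HOL-Computational_Algebra.Polynomial" Complex_Main
begin

fun horner_mat :: "nat \<Rightarrow> 'a::comm_ring_1 list \<Rightarrow> 'a mat \<Rightarrow> 'a mat" where
  "horner_mat n [] A = 0\<^sub>m n n"
| "horner_mat n (c # cs) A = c \<cdot>\<^sub>m 1\<^sub>m n + A * horner_mat n cs A"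

definition poly_mat :: "'a::comm_ring_1 poly \<Rightarrow> 'a mat \<Rightarrow> 'a mat" where
  "poly_mat p A = horner_mat (dim_row A) (coeffs p) A"

definition is_min_poly :: "'a::field mat \<Rightarrow> 'a poly \<Rightarrow> bool" where
  "is_min_poly A m \<longleftrightarrow> lead_coeff m = 1 \<and> poly_mat m A = 0\<^sub>m (dim_row A) (dim_row A) \<and>
     (\<forall>q. q \<noteq> 0 \<and> poly_mat q A = 0\<^sub>m (dim_row A) (dim_row A) \<longrightarrow> degree m \<le> degree q)"

definition min_poly :: "'a::field mat \<Rightarrow> 'a poly" where
  "min_poly A = (THE m. is_min_poly A m)"

definition mats_k :: "nat \<Rightarrow> nat \<Rightarrow> complex mat set" where
  "mats_k n k = {A \<in> carrier_mat n n. degree (min_poly A) \<le> n - k}"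

definition diagonalizable :: "complex mat \<Rightarrow> bool" where
  "diagonalizable A \<longleftrightarrow> (\<exists>D. D \<in> carrier_mat (dim_row A) (dim_row A) \<and> diagonal_mat D \<and> similar_mat A D)"

inductive_set mat_polyfun :: "nat \<Rightarrow> (complex mat \<Rightarrow> complex) set" for n where
  const: "(\<lambda>A. c) \<in> mat_polyfun n"
| entry: "i < n \<Longrightarrow> j < n \<Longrightarrow> (\<lambda>A. A $$ (i, j)) \<in> mat_polyfun n"
| add: "f \<in> mat_polyfun n \<Longrightarrow> g \<in> mat_polyfun n \<Longrightarrow> (\<lambda>A. f A + g A) \<in> mat_polyfun n"
| mult: "f \<in> mat_polyfun n \<Longrightarrow> g \<in> mat_polyfun n \<Longrightarrow> (\<lambda>A. f A * g A) \<in> mat_polyfun n"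

definition zariski_closed :: "nat \<Rightarrow> complex mat set \<Rightarrow> bool" where
  "zariski_closed n Z \<longleftrightarrow> (\<exists>F \<subseteq> mat_polyfun n. Z = {A \<in> carrier_mat n n. \<forall>f \<in> F. f A = 0})"

definition zariski_closure :: "nat \<Rightarrow> complex mat set \<Rightarrow> complex mat set" where
  "zariski_closure n S = \<Inter>{Z. zariski_closed n Z \<and> S \<subseteq> Z}"

text \<open>S is Zariski dense in X (X with the subspace topology).\<close>
definition zariski_dense_in :: "nat \<Rightarrow> complex mat set \<Rightarrow> complex mat set \<Rightarrow> bool" where
  "zariski_dense_in n S X \<longleftrightarrow> S \<subseteq> X \<and> X \<subseteq> zariski_closure n S"

end

theory Submission
  imports Defs "Jordan_Normal_Form.Jordan_Normal_Form_Existence"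
begin


lemma pow_mat_comm: "A \<in> carrier_mat n n \<Longrightarrow> A * A ^\<^sub>m r = A ^\<^sub>m Suc r"
proof (induct r)
  case 0 then show ?case by simp
next
  case (Suc r)
  have "A * A ^\<^sub>m Suc r = A * (A ^\<^sub>m r * A)" by simp
  also have "\<dots> = (A * A ^\<^sub>m r) * A" using Suc(2) by (subst assoc_mult_mat[of _ n n _ n _ n], auto)
  also have "\<dots> = A ^\<^sub>m Suc (Suc r)" using Suc by simp
  finally show ?case .
qed

lemma horner_carrier: "A \<in> carrier_mat n n \<Longrightarrow> horner_mat n cs A \<in> carrier_mat n n"
  by (induct cs) auto

lemma horner_entry:
  assumes A: "A \<in> carrier_mat n n" and i: "i < n" and j: "j < n"
  shows "horner_mat n cs A $$ (i,j) = (\<Sum>r<length cs. cs ! r * (A ^\<^sub>m r) $$ (i,j))"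
  using i j
proof (induct cs arbitrary: i j)
  case Nil then show ?case by simp
next
  case (Cons c cs)
  let ?H = "horner_mat n cs A"
  have H: "?H \<in> carrier_mat n n" using horner_carrier[OF A] .
  have "horner_mat n (c # cs) A $$ (i,j) = c * (1\<^sub>m n) $$ (i,j) + (A * ?H) $$ (i,j)"
    using Cons.prems A H by simp
  also have "(A * ?H) $$ (i,j) = (\<Sum>l<n. A $$ (i,l) * ?H $$ (l,j))"
    using Cons.prems A H by (simp add: scalar_prod_def lessThan_atLeast0)
  also have "\<dots> = (\<Sum>l<n. A $$ (i,l) * (\<Sum>r<length cs. cs ! r * (A ^\<^sub>m r) $$ (l,j)))"
    using Cons by simp
  also have "\<dots> = (\<Sum>r<length cs. cs ! r * (\<Sum>l<n. A $$ (i,l) * (A ^\<^sub>m r) $$ (l,j)))"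
    by (simp add: sum_distrib_left sum_distrib_right mult_ac sum.swap[of _ "{..<n}"])
  also have "\<dots> = (\<Sum>r<length cs. cs ! r * (A ^\<^sub>m Suc r) $$ (i,j))"
  proof (rule sum.cong[OF refl])
    fix r
    have "(A * A ^\<^sub>m r) $$ (i,j) = (\<Sum>l<n. A $$ (i,l) * (A ^\<^sub>m r) $$ (l,j))"
      using Cons.prems A by (simp add: scalar_prod_def lessThan_atLeast0)
    then show "cs ! r * (\<Sum>l<n. A $$ (i,l) * (A ^\<^sub>m r) $$ (l,j)) = cs ! r * (A ^\<^sub>m Suc r) $$ (i,j)"
      using pow_mat_comm[OF A, of r] by simp
  qed
  finally have e: "horner_mat n (c # cs) A $$ (i,j) = c * (1\<^sub>m n) $$ (i,j) + (\<Sum>r<length cs. cs ! r * (A ^\<^sub>m Suc r) $$ (i,j))" .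
  have "(\<Sum>r<length (c # cs). (c # cs) ! r * (A ^\<^sub>m r) $$ (i,j))
     = (c # cs) ! 0 * (A ^\<^sub>m 0) $$ (i,j) + (\<Sum>r<length cs. (c # cs) ! Suc r * (A ^\<^sub>m Suc r) $$ (i,j))"
    by (simp only: length_Cons sum.lessThan_Suc_shift)
  also have "\<dots> = c * (1\<^sub>m n) $$ (i,j) + (\<Sum>r<length cs. cs ! r * (A ^\<^sub>m Suc r) $$ (i,j))"
    using Cons.prems A by simp
  finally show ?case using e by simp
qed



lemma poly_mat_carrier: "A \<in> carrier_mat n n \<Longrightarrow> poly_mat p A \<in> carrier_mat n n"
  unfolding poly_mat_def using horner_carrier by auto

lemma poly_mat_entry:
  assumes A: "A \<in> carrier_mat n n" and i: "i < n" and j: "j < n" and N: "degree p < N"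
  shows "poly_mat p A $$ (i,j) = (\<Sum>r<N. coeff p r * (A ^\<^sub>m r) $$ (i,j))"
proof -
  have dr: "dim_row A = n" using A by auto
  have L: "length (coeffs p) \<le> N"
    using N by (cases "p = 0") (auto simp: length_coeffs_degree)
  have "poly_mat p A $$ (i,j) = (\<Sum>r<length (coeffs p). coeffs p ! r * (A ^\<^sub>m r) $$ (i,j))"
    unfolding poly_mat_def dr by (rule horner_entry[OF A i j])
  also have "\<dots> = (\<Sum>r<length (coeffs p). coeff p r * (A ^\<^sub>m r) $$ (i,j))"
  proof (rule sum.cong[OF refl])
    fix r assume "r \<in> {..<length (coeffs p)}"
    then have "r < length (coeffs p)" by auto
    then have "coeffs p ! r = coeff p r"
      by (cases "p = 0") (auto simp: coeffs_nth length_coeffs_degree)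
    then show "coeffs p ! r * (A ^\<^sub>m r) $$ (i,j) = coeff p r * (A ^\<^sub>m r) $$ (i,j)" by simp
  qed
  also have "\<dots> = (\<Sum>r<N. coeff p r * (A ^\<^sub>m r) $$ (i,j))"
  proof (rule sum.mono_neutral_left)
    show "\<forall>r\<in>{..<N} - {..<length (coeffs p)}. coeff p r * (A ^\<^sub>m r) $$ (i,j) = 0"
    proof
      fix r assume "r \<in> {..<N} - {..<length (coeffs p)}"
      then have "length (coeffs p) \<le> r" by auto
      then have "coeff p r = 0"
        by (cases "p = 0") (auto simp: length_coeffs_degree coeff_eq_0)
      then show "coeff p r * (A ^\<^sub>m r) $$ (i,j) = 0" by simp
    qed
  qed (use L in auto)
  finally show ?thesis .
qed

lemma poly_mat_zero_iff:
  assumes A: "A \<in> carrier_mat n n"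
  shows "poly_mat p A = 0\<^sub>m n n \<longleftrightarrow> (\<forall>i<n. \<forall>j<n. poly_mat p A $$ (i,j) = 0)"
  using poly_mat_carrier[OF A, of p] by (auto intro!: eq_matI)

lemma poly_mat_diff_zero:
  assumes A: "(A :: 'a :: field mat) \<in> carrier_mat n n"
  and p: "poly_mat p A = 0\<^sub>m n n" and q: "poly_mat q A = 0\<^sub>m n n"
  shows "poly_mat (p - q) A = 0\<^sub>m n n"
proof -
  define N where "N = Suc (max (degree p) (degree q))"
  have dpq: "degree (p - q) < N" unfolding N_def using degree_diff_le_max[of p q] by auto
  have "poly_mat (p - q) A $$ (i,j) = 0" if i: "i < n" and j: "j < n" for i j
  proof -
    have "poly_mat (p - q) A $$ (i,j) = (\<Sum>r<N. coeff (p - q) r * (A ^\<^sub>m r) $$ (i,j))"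
      by (rule poly_mat_entry[OF A i j dpq])
    also have "\<dots> = (\<Sum>r<N. coeff p r * (A ^\<^sub>m r) $$ (i,j)) - (\<Sum>r<N. coeff q r * (A ^\<^sub>m r) $$ (i,j))"
      by (simp add: sum_subtractf left_diff_distrib)
    also have "(\<Sum>r<N. coeff p r * (A ^\<^sub>m r) $$ (i,j)) = poly_mat p A $$ (i,j)"
      by (rule poly_mat_entry[symmetric, OF A i j], simp add: N_def)
    also have "(\<Sum>r<N. coeff q r * (A ^\<^sub>m r) $$ (i,j)) = poly_mat q A $$ (i,j)"
      by (rule poly_mat_entry[symmetric, OF A i j], simp add: N_def)
    finally show ?thesis using p q i j by simp
  qed
  then show ?thesis using poly_mat_zero_iff[OF A] by blast
qed

lemma poly_mat_smult_zero:
  assumes A: "(A :: 'a :: field mat) \<in> carrier_mat n n"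
  and p: "poly_mat p A = 0\<^sub>m n n"
  shows "poly_mat (smult c p) A = 0\<^sub>m n n"
proof -
  define N where "N = Suc (degree p)"
  have d: "degree (smult c p) < N" unfolding N_def using degree_smult_le[of c p] by auto
  have "poly_mat (smult c p) A $$ (i,j) = 0" if i: "i < n" and j: "j < n" for i j
  proof -
    have "poly_mat (smult c p) A $$ (i,j) = (\<Sum>r<N. coeff (smult c p) r * (A ^\<^sub>m r) $$ (i,j))"
      by (rule poly_mat_entry[OF A i j d])
    also have "\<dots> = c * (\<Sum>r<N. coeff p r * (A ^\<^sub>m r) $$ (i,j))"
      by (simp add: sum_distrib_left mult_ac)
    also have "(\<Sum>r<N. coeff p r * (A ^\<^sub>m r) $$ (i,j)) = poly_mat p A $$ (i,j)"
      by (rule poly_mat_entry[symmetric, OF A i j], simp add: N_def)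
    finally show ?thesis using p i j by simp
  qed
  then show ?thesis using poly_mat_zero_iff[OF A] by blast
qed

lemma min_poly_exists:
  assumes A: "(A :: 'a :: field mat) \<in> carrier_mat n n"
  and q: "q \<noteq> 0" "poly_mat q A = 0\<^sub>m n n"
  shows "is_min_poly A (min_poly A)" "degree (min_poly A) \<le> degree q"
proof -
  have dr: "dim_row A = n" using A by auto
  define P where "P = (\<lambda>d. \<exists>p. p \<noteq> 0 \<and> poly_mat p A = 0\<^sub>m n n \<and> degree p = d)"
  have Pq: "P (degree q)" unfolding P_def using q by blast
  define d where "d = (LEAST d. P d)"
  have Pd: "P d" unfolding d_def using Pq by (rule LeastI)
  have dmin: "\<And>p. p \<noteq> 0 \<Longrightarrow> poly_mat p A = 0\<^sub>m n n \<Longrightarrow> d \<le> degree p"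
    unfolding d_def P_def by (rule Least_le, blast)
  from Pd obtain p where p: "p \<noteq> 0" "poly_mat p A = 0\<^sub>m n n" "degree p = d" unfolding P_def by blast
  define m where "m = smult (inverse (lead_coeff p)) p"
  have lc: "lead_coeff m = 1" unfolding m_def using p by (metis degree_smult_eq inverse_zero_imp_zero lead_coeff_smult leading_coeff_0_iff left_inverse)
  have m0: "poly_mat m A = 0\<^sub>m n n" unfolding m_def by (rule poly_mat_smult_zero[OF A p(2)])
  have dm: "degree m = d" unfolding m_def using p by (metis degree_smult_eq inverse_zero_imp_zero leading_coeff_0_iff)
  have ism: "is_min_poly A m" unfolding is_min_poly_def dr using lc m0 dm dmin by auto
  have uniq: "m' = m" if m': "is_min_poly A m'" for m'
  proof (rule ccontr)
    assume ne: "m' \<noteq> m"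
    have m'1: "lead_coeff m' = 1" "poly_mat m' A = 0\<^sub>m n n"
      and m'min: "\<And>q. q \<noteq> 0 \<Longrightarrow> poly_mat q A = 0\<^sub>m n n \<Longrightarrow> degree m' \<le> degree q"
      using m' unfolding is_min_poly_def dr by auto
    have m'0: "m' \<noteq> 0" using m'1 by auto
    have "m \<noteq> 0" using lc by auto
    have dm': "degree m' = d"
      using m'min[OF \<open>m \<noteq> 0\<close> m0] dmin[OF m'0 m'1(2)] dm by auto
    have z: "poly_mat (m' - m) A = 0\<^sub>m n n" by (rule poly_mat_diff_zero[OF A m'1(2) m0])
    have nz: "m' - m \<noteq> 0" using ne by auto
    have le: "degree (m' - m) \<le> d" using degree_diff_le_max[of m' m] dm dm' by auto
    have cd: "coeff (m' - m) d = 0" using m'1(1) lc dm dm' by simp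
    have "degree (m' - m) \<noteq> d"
    proof
      assume "degree (m' - m) = d"
      then have "lead_coeff (m' - m) = 0" using cd by simp
      then show False using nz leading_coeff_0_iff by blast
    qed
    with le have "degree (m' - m) < d" by auto
    with dmin[OF nz z] show False by auto
  qed
  have "min_poly A = m" unfolding min_poly_def using ism uniq by (rule the_equality)
  then show "is_min_poly A (min_poly A)" "degree (min_poly A) \<le> degree q"
    using ism dm dmin[OF q] by auto
qed



lemma horner_sim:
  assumes P: "P \<in> carrier_mat n n" and Q: "Q \<in> carrier_mat n n" and B: "B \<in> carrier_mat n n"
  and PQ: "P * Q = 1\<^sub>m n" and QP: "Q * P = 1\<^sub>m n"
  shows "horner_mat n cs (P * B * Q) = P * horner_mat n cs B * Q"
proof (induct cs)
  case Nil
  have "P * 0\<^sub>m n n = 0\<^sub>m n n" using P by (simp add: right_mult_zero_mat[of P n n])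
  moreover have "0\<^sub>m n n * Q = 0\<^sub>m n n" using Q by (simp add: left_mult_zero_mat[of Q n n])
  ultimately show ?case by simp
next
  case (Cons c cs)
  define H where "H = horner_mat n cs B"
  have H: "H \<in> carrier_mat n n" unfolding H_def using horner_carrier[OF B] .
  have "P * (c \<cdot>\<^sub>m 1\<^sub>m n) * Q = (c \<cdot>\<^sub>m P) * Q"
    using P by (simp add: mult_smult_distrib[of P n n "1\<^sub>m n" n])
  also have "\<dots> = c \<cdot>\<^sub>m 1\<^sub>m n" using P Q PQ by (simp add: mult_smult_assoc_mat[of P n n])
  finally have e1: "c \<cdot>\<^sub>m 1\<^sub>m n = P * (c \<cdot>\<^sub>m 1\<^sub>m n) * Q" by simp
  have "(P * B * Q) * (P * H * Q) = P * B * (Q * P) * H * Q"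
    using P Q B H by (simp add: assoc_mult_mat[of _ n n _ n _ n])
  also have "\<dots> = P * (B * H) * Q"
    using P Q B H QP by (simp add: assoc_mult_mat[of _ n n _ n _ n])
  finally have e2: "(P * B * Q) * (P * H * Q) = P * (B * H) * Q" .
  have "horner_mat n (c # cs) (P * B * Q) = c \<cdot>\<^sub>m 1\<^sub>m n + (P * B * Q) * (P * H * Q)"
    using Cons unfolding H_def by simp
  also have "\<dots> = P * (c \<cdot>\<^sub>m 1\<^sub>m n) * Q + P * (B * H) * Q" using e1 e2 by simp
  also have "\<dots> = P * (c \<cdot>\<^sub>m 1\<^sub>m n + B * H) * Q"
  proof -
    have "P * (c \<cdot>\<^sub>m 1\<^sub>m n + B * H) = P * (c \<cdot>\<^sub>m 1\<^sub>m n) + P * (B * H)"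
      using P B H by (intro mult_add_distrib_mat[of P n n _ n]) auto
    moreover have "(P * (c \<cdot>\<^sub>m 1\<^sub>m n) + P * (B * H)) * Q = P * (c \<cdot>\<^sub>m 1\<^sub>m n) * Q + P * (B * H) * Q"
      using P B H Q by (intro add_mult_distrib_mat[of _ n n _ Q n]) auto
    ultimately show ?thesis by simp
  qed
  finally show ?case unfolding H_def by simp
qed

lemma poly_mat_similar_zero:
  assumes "similar_mat A B" and "poly_mat q B = 0\<^sub>m (dim_row B) (dim_row B)"
  shows "poly_mat q A = 0\<^sub>m (dim_row A) (dim_row A)"
proof -
  from similar_matD[OF assms(1)] obtain n P Q where
    c: "{A,B,P,Q} \<subseteq> carrier_mat n n" and PQ: "P * Q = 1\<^sub>m n" and QP: "Q * P = 1\<^sub>m n"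
    and AB: "A = P * B * Q" by blast
  have dA: "dim_row A = n" and dB: "dim_row B = n" using c by auto
  have "poly_mat q A = P * horner_mat n (coeffs q) B * Q"
    unfolding poly_mat_def dA unfolding AB using c PQ QP by (intro horner_sim) auto
  also have "horner_mat n (coeffs q) B = 0\<^sub>m n n" using assms(2) unfolding poly_mat_def dB .
  also have "P * 0\<^sub>m n n = 0\<^sub>m n n" using c by (simp add: right_mult_zero_mat[of P n n])
  also have "0\<^sub>m n n * Q = 0\<^sub>m n n" using c by (simp add: left_mult_zero_mat[of Q n n])
  finally show ?thesis using dA by simp
qed

lemma horner_four_block:
  assumes X: "X \<in> carrier_mat a a" and Y: "Y \<in> carrier_mat b b"
  shows "horner_mat (a + b) cs (four_block_mat X (0\<^sub>m a b) (0\<^sub>m b a) Y)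
    = four_block_mat (horner_mat a cs X) (0\<^sub>m a b) (0\<^sub>m b a) (horner_mat b cs Y)"
proof (induct cs)
  case Nil
  show ?case by simp
next
  case (Cons c cs)
  define H1 where "H1 = horner_mat a cs X"
  define H2 where "H2 = horner_mat b cs Y"
  have H1: "H1 \<in> carrier_mat a a" unfolding H1_def using horner_carrier[OF X] .
  have H2: "H2 \<in> carrier_mat b b" unfolding H2_def using horner_carrier[OF Y] .
  have "horner_mat (a + b) (c # cs) (four_block_mat X (0\<^sub>m a b) (0\<^sub>m b a) Y)
     = c \<cdot>\<^sub>m four_block_mat (1\<^sub>m a) (0\<^sub>m a b) (0\<^sub>m b a) (1\<^sub>m b)
       + four_block_mat X (0\<^sub>m a b) (0\<^sub>m b a) Y * four_block_mat H1 (0\<^sub>m a b) (0\<^sub>m b a) H2"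
    using Cons unfolding H1_def H2_def by simp
  also have "\<dots> = four_block_mat (c \<cdot>\<^sub>m 1\<^sub>m a + X * H1) (0\<^sub>m a b) (0\<^sub>m b a) (c \<cdot>\<^sub>m 1\<^sub>m b + Y * H2)"
    using X Y H1 H2
    by (simp add: smult_four_block_mat[of _ a a _ b _ b] mult_four_block_mat[of _ a a _ b _ b _ _ a _ b]
       add_four_block_mat[of _ a a _ b _ b] right_mult_zero_mat left_mult_zero_mat del: four_block_one_mat)
  finally show ?case unfolding H1_def H2_def by simp
qed

lemma four_block_zero_iff:
  assumes X: "X \<in> carrier_mat a a" and Y: "Y \<in> carrier_mat b b"
  shows "four_block_mat X (0\<^sub>m a b) (0\<^sub>m b a) Y = 0\<^sub>m (a + b) (a + b) \<longleftrightarrow> X = 0\<^sub>m a a \<and> Y = 0\<^sub>m b b"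
proof
  assume z: "four_block_mat X (0\<^sub>m a b) (0\<^sub>m b a) Y = 0\<^sub>m (a + b) (a + b)"
  have "X $$ (i,j) = 0" if "i < a" "j < a" for i j
  proof -
    have "four_block_mat X (0\<^sub>m a b) (0\<^sub>m b a) Y $$ (i,j) = X $$ (i,j)" using X Y that by simp
    then show ?thesis using z that by simp
  qed
  moreover have "Y $$ (i,j) = 0" if "i < b" "j < b" for i j
  proof -
    have "four_block_mat X (0\<^sub>m a b) (0\<^sub>m b a) Y $$ (i + a, j + a) = Y $$ (i,j)" using X Y that by simp
    then show ?thesis using z that by simp
  qed
  ultimately show "X = 0\<^sub>m a a \<and> Y = 0\<^sub>m b b" using X Y by (auto intro!: eq_matI)
qed simp

lemma poly_mat_jordan_matrix_zero:
  "poly_mat q (jordan_matrix L) = 0\<^sub>m (sum_list (map fst L)) (sum_list (map fst L))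
   \<longleftrightarrow> (\<forall>(m,c)\<in>set L. poly_mat q (jordan_block m c) = 0\<^sub>m m m)"
proof (induct L)
  case Nil
  have "poly_mat q (jordan_matrix []) \<in> carrier_mat 0 0"
    using poly_mat_carrier[OF jordan_matrix_carrier[of "[] :: (nat \<times> 'a) list"]] by simp
  then show ?case by (auto intro!: eq_matI)
next
  case (Cons mc L)
  obtain m c where mc: "mc = (m,c)" by force
  let ?s = "sum_list (map fst L)"
  have "poly_mat q (jordan_matrix (mc # L))
    = four_block_mat (poly_mat q (jordan_block m c)) (0\<^sub>m m ?s) (0\<^sub>m ?s m) (poly_mat q (jordan_matrix L))"
    unfolding mc jordan_matrix_Cons poly_mat_def
    by (simp add: horner_four_block[of _ m _ ?s])
  moreover have "poly_mat q (jordan_block m c) \<in> carrier_mat m m"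
    by (rule poly_mat_carrier, simp)
  moreover have "poly_mat q (jordan_matrix L) \<in> carrier_mat ?s ?s"
    by (rule poly_mat_carrier, simp)
  ultimately show ?case
    using Cons mc four_block_zero_iff[of "poly_mat q (jordan_block m c)" m "poly_mat q (jordan_matrix L)" ?s]
    by (simp del: four_block_zero_mat)
qed



lemma pcompose_monom': "pcompose (monom c r) p = smult c (p ^ r)"
  by (induct r) (auto simp: monom_Suc pcompose_pCons monom_0)

lemma poly_as_sum_N: "degree q < N \<Longrightarrow> (\<Sum>r<N. monom (coeff q r) r) = q"
  by (rule poly_eqI) (auto simp: coeff_sum coeff_monom coeff_eq_0)

lemma coeff_pcompose_linear:
  fixes q :: "'a :: comm_ring_1 poly"
  assumes N: "degree q < N"
  shows "coeff (pcompose q [:a,1:]) d = (\<Sum>r<N. coeff q r * (of_nat (r choose d) * a ^ (r - d)))"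
proof -
  have "pcompose q [:a,1:] = (\<Sum>r<N. smult (coeff q r) ([:a,1:] ^ r))"
    by (subst poly_as_sum_N[OF N, symmetric]) (simp add: pcompose_sum pcompose_monom')
  then have "coeff (pcompose q [:a,1:]) d = (\<Sum>r<N. coeff q r * coeff ([:a,1:] ^ r) d)"
    by (simp add: coeff_sum)
  also have "\<dots> = (\<Sum>r<N. coeff q r * (of_nat (r choose d) * a ^ (r - d)))"
  proof (rule sum.cong[OF refl])
    fix r
    have "coeff ([:a,1:] ^ r) d = of_nat (r choose d) * a ^ (r - d)"
    proof (cases "d \<le> r")
      case True
      then show ?thesis by (simp add: coeff_linear_poly_power)
    next
      case False
      have "degree ([:a,1:] ^ r) \<le> r"
        using degree_power_le[of "[:a,1:]" r] by (simp add: order_trans)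
      then have "coeff ([:a,1:] ^ r) d = 0" using False by (intro coeff_eq_0) auto
      then show ?thesis using False by (simp add: binomial_eq_0)
    qed
    then show "coeff q r * coeff ([:a,1:] ^ r) d = coeff q r * (of_nat (r choose d) * a ^ (r - d))" by simp
  qed
  finally show ?thesis .
qed

lemma poly_mat_jordan_block_entry:
  fixes q :: "'a :: field poly"
  assumes i: "i < m" and j: "j < m"
  shows "poly_mat q (jordan_block m a) $$ (i,j) = (if i \<le> j then coeff (pcompose q [:a,1:]) (j - i) else 0)"
proof -
  define N where "N = Suc (degree q)"
  have N: "degree q < N" unfolding N_def by simp
  have "poly_mat q (jordan_block m a) $$ (i,j) = (\<Sum>r<N. coeff q r * (jordan_block m a ^\<^sub>m r) $$ (i,j))"
    by (rule poly_mat_entry[OF jordan_block_carrier i j N])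
  also have "\<dots> = (\<Sum>r<N. coeff q r * (if i \<le> j then of_nat (r choose (j - i)) * a ^ (r + i - j) else 0))"
    using i j by (simp add: jordan_block_pow)
  also have "\<dots> = (if i \<le> j then coeff (pcompose q [:a,1:]) (j - i) else 0)"
  proof (cases "i \<le> j")
    case True
    have "r + i - j = r - (j - i)" for r using True by auto
    then show ?thesis using True by (simp add: coeff_pcompose_linear[OF N])
  qed simp
  finally show ?thesis .
qed

lemma pcompose_power_left: "pcompose (p ^ k) r = (pcompose p r) ^ k"
  by (induct k) (auto simp: pcompose_mult pcompose_1)

lemma linear_dvd_iff_pcompose:
  fixes q :: "'a :: comm_ring_1 poly"
  shows "[:-a,1:] ^ m dvd q \<longleftrightarrow> monom 1 m dvd pcompose q [:a,1:]"
proof -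
  have c1: "pcompose [:-a,1:] [:a,1:] = [:0,1:]"
    by (simp add: pcompose_pCons)
  have c2: "pcompose [:0,1:] [:-a,1:] = [:-a,1:]"
    by (simp add: pcompose_pCons)
  have c3: "pcompose [:a,1:] [:-a,1:] = [:0,1:]"
    by (simp add: pcompose_pCons)
  have m: "monom (1::'a) m = [:0,1:] ^ m" by (simp add: monom_altdef)
  show ?thesis
  proof
    assume "[:-a,1:] ^ m dvd q"
    then obtain h where "q = [:-a,1:] ^ m * h" by (erule dvdE)
    then have "pcompose q [:a,1:] = [:0,1:] ^ m * pcompose h [:a,1:]"
      by (simp add: pcompose_mult pcompose_power_left c1)
    then show "monom 1 m dvd pcompose q [:a,1:]" unfolding m by simp
  next
    assume "monom 1 m dvd pcompose q [:a,1:]"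
    then obtain h where h: "pcompose q [:a,1:] = [:0,1:] ^ m * h" unfolding m by (erule dvdE)
    have "q = pcompose (pcompose q [:a,1:]) [:-a,1:]"
      by (simp add: pcompose_assoc[symmetric] c3)
    also have "\<dots> = [:-a,1:] ^ m * pcompose h [:-a,1:]"
      unfolding h by (simp add: pcompose_mult pcompose_power_left c2)
    finally show "[:-a,1:] ^ m dvd q" by simp
  qed
qed

lemma poly_mat_jordan_block_zero_iff:
  fixes q :: "'a :: field poly"
  shows "poly_mat q (jordan_block m a) = 0\<^sub>m m m \<longleftrightarrow> [:-a,1:] ^ m dvd q"
proof -
  have c: "jordan_block m a \<in> carrier_mat m m" by simp
  have "poly_mat q (jordan_block m a) = 0\<^sub>m m m \<longleftrightarrow> (\<forall>d<m. coeff (pcompose q [:a,1:]) d = 0)"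
  proof
    assume z: "poly_mat q (jordan_block m a) = 0\<^sub>m m m"
    show "\<forall>d<m. coeff (pcompose q [:a,1:]) d = 0"
    proof (intro allI impI)
      fix d assume d: "d < m"
      have "poly_mat q (jordan_block m a) $$ (0,d) = coeff (pcompose q [:a,1:]) d"
        using d by (simp add: poly_mat_jordan_block_entry)
      then show "coeff (pcompose q [:a,1:]) d = 0" using z d by simp
    qed
  next
    assume h: "\<forall>d<m. coeff (pcompose q [:a,1:]) d = 0"
    show "poly_mat q (jordan_block m a) = 0\<^sub>m m m"
      unfolding poly_mat_zero_iff[OF c]
      using h by (auto simp: poly_mat_jordan_block_entry)
  qed
  also have "\<dots> \<longleftrightarrow> monom 1 m dvd pcompose q [:a,1:]" by (simp add: monom_1_dvd_iff')
  also have "\<dots> \<longleftrightarrow> [:-a,1:] ^ m dvd q" by (simp add: linear_dvd_iff_pcompose)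
  finally show ?thesis .
qed



definition pb :: "nat \<Rightarrow> complex \<Rightarrow> complex \<Rightarrow> complex mat" where
  "pb m a t = mat m m (\<lambda>(i,j). if i = j then a + t * of_nat i else if Suc i = j then 1 else 0)"

lemma pb_carrier[simp]: "pb m a t \<in> carrier_mat m m" and pb_dims[simp]: "dim_row (pb m a t) = m" "dim_col (pb m a t) = m"
  unfolding pb_def by auto

lemma pb_index[simp]: "i < m \<Longrightarrow> j < m \<Longrightarrow> pb m a t $$ (i,j) = (if i = j then a + t * of_nat i else if Suc i = j then 1 else 0)"
  unfolding pb_def by auto

lemma pb_0: "pb m a 0 = jordan_block m a"
  by (rule eq_matI) auto

lemma sum_list_singletons: "(\<Sum>x\<leftarrow>xs. {#x#}) = mset xs"
  by (induct xs) auto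

lemma pb_jnf:
  assumes t: "t \<noteq> 0"
  shows "\<exists>bs. jordan_nf (pb m a t) bs \<and> (\<forall>x\<in>set bs. fst x = 1 \<and> (\<exists>i<m. snd x = a + t * of_nat i))"
proof -
  define xs where "xs = map (\<lambda>i. a + t * of_nat i) [0..<m]"
  have c: "pb m a t \<in> carrier_mat m m" by simp
  have ut: "upper_triangular (pb m a t)" unfolding upper_triangular_def by auto
  have dg: "diag_mat (pb m a t) = xs" unfolding diag_mat_def xs_def by auto
  have cp: "char_poly (pb m a t) = (\<Prod>x\<leftarrow>xs. [:-x,1:])"
    using char_poly_upper_triangular[OF c ut] dg by simp
  from jordan_nf_exists[OF c cp] obtain bs where jnf: "jordan_nf (pb m a t) bs" by blast
  have nz: "(\<Prod>x\<leftarrow>xs. [:-x,1:]) \<noteq> (0 :: complex poly)"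
    by (auto simp: prod_list_zero_iff)
  have pr: "proots (\<Prod>x\<leftarrow>xs. [:-x,1:]) = mset xs"
  proof -
    have "proots (\<Prod>x\<leftarrow>xs. [:-x,1:]) = proots (\<Prod>p\<leftarrow>map (\<lambda>x. [:-x,1:]) xs. p)" by (simp add: o_def)
    also have "\<dots> = (\<Sum>p\<leftarrow>map (\<lambda>x. [:-x,1:]) xs. proots p)"
      by (rule proots_prod_list) auto
    also have "\<dots> = (\<Sum>x\<leftarrow>xs. {#x#})" by (simp add: o_def)
    finally show ?thesis by (simp add: sum_list_singletons)
  qed
  have ord: "order c (char_poly (pb m a t)) = count (mset xs) c" for c
    unfolding cp using count_proots[OF nz, of c] pr by simp
  have dist: "distinct xs" unfolding xs_def
    using t by (auto simp: distinct_map inj_on_def)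
  have cnt: "count (mset xs) c = (if c \<in> set xs then 1 else 0)" for c
    using dist by (simp add: distinct_count_atmost_1)
  have "\<forall>x\<in>set bs. fst x = 1 \<and> (\<exists>i<m. snd x = a + t * of_nat i)"
  proof
    fix x assume x: "x \<in> set bs"
    obtain m' c where xmc: "x = (m', c)" by force
    have m'0: "m' \<noteq> 0" using jnf x xmc unfolding jordan_nf_def by force
    have "m' \<le> order c (char_poly (pb m a t))"
      using jordan_nf_block_size_order_bound[OF jnf] x xmc by auto
    then have le: "m' \<le> (if c \<in> set xs then 1 else 0)" unfolding ord cnt .
    then have "c \<in> set xs" using m'0 by (auto split: if_splits)
    then have "m' = 1" using le m'0 by auto
    moreover from \<open>c \<in> set xs\<close> have "\<exists>i<m. c = a + t * of_nat i" unfolding xs_def by auto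
    ultimately show "fst x = 1 \<and> (\<exists>i<m. snd x = a + t * of_nat i)" using xmc by auto
  qed
  then show ?thesis using jnf by blast
qed

lemma jordan_matrix_diagonal:
  assumes "\<forall>x\<in>set L. fst x = 1"
  shows "diagonal_mat (jordan_matrix L)"
  using assms
proof (induct L)
  case Nil
  then show ?case by (simp add: diagonal_mat_def jordan_matrix_def)
next
  case (Cons mc L)
  obtain m c where mc: "mc = (m,c)" by force
  with Cons have m: "m = 1" by auto
  have IH: "diagonal_mat (jordan_matrix L)" using Cons by auto
  show ?case
    unfolding diagonal_mat_def mc jordan_matrix_Cons m
  proof (intro allI impI)
    fix i j
    assume i: "i < dim_row (four_block_mat (jordan_block 1 c) (0\<^sub>m 1 (sum_list (map fst L)))
      (0\<^sub>m (sum_list (map fst L)) 1) (jordan_matrix L))"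
      and j: "j < dim_col (four_block_mat (jordan_block 1 c) (0\<^sub>m 1 (sum_list (map fst L)))
      (0\<^sub>m (sum_list (map fst L)) 1) (jordan_matrix L))" and ij: "i \<noteq> j"
    show "four_block_mat (jordan_block 1 c) (0\<^sub>m 1 (sum_list (map fst L)))
      (0\<^sub>m (sum_list (map fst L)) 1) (jordan_matrix L) $$ (i, j) = 0"
      using i j ij IH unfolding diagonal_mat_def by auto
  qed
qed



definition Jt :: "(nat \<times> complex) list \<Rightarrow> complex \<Rightarrow> complex mat" where
  "Jt L t = diag_block_mat (map (\<lambda>(m,a). pb m a t) L)"

lemma Jt_dims[simp]: "dim_row (Jt L t) = sum_list (map fst L)" "dim_col (Jt L t) = sum_list (map fst L)"
  unfolding Jt_def by (induct L, auto simp: Let_def)+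

lemma Jt_carrier[simp]: "Jt L t \<in> carrier_mat (sum_list (map fst L)) (sum_list (map fst L))"
  unfolding carrier_mat_def by simp

lemma Jt_0: "Jt L 0 = jordan_matrix L"
  unfolding Jt_def jordan_matrix_def by (simp add: pb_0 case_prod_unfold)

lemma Jt_affine:
  "i < sum_list (map fst L) \<Longrightarrow> j < sum_list (map fst L) \<Longrightarrow>
   Jt L t $$ (i,j) = Jt L 0 $$ (i,j) + t * (Jt L 1 $$ (i,j) - Jt L 0 $$ (i,j))"
proof (induct L arbitrary: i j)
  case Nil then show ?case by simp
next
  case (Cons mc L)
  obtain m c where mc: "mc = (m,c)" by force
  have e: "Jt ((m,c) # L) s = four_block_mat (pb m c s) (0\<^sub>m m (sum_list (map fst L))) (0\<^sub>m (sum_list (map fst L)) m) (Jt L s)" for s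
    unfolding Jt_def by (simp add: Let_def Jt_def[symmetric])
  show ?case using Cons.prems Cons.hyps unfolding mc e by (auto simp: algebra_simps)
qed

lemma Jt_jnf:
  assumes t: "t \<noteq> 0"
  shows "\<exists>cs. jordan_nf (Jt L t) cs \<and> (\<forall>x\<in>set cs. fst x = 1 \<and> (\<exists>y\<in>set L. \<exists>i<fst y. snd x = snd y + t * of_nat i))"
proof -
  have "\<forall>y\<in>set L. \<exists>bs. jordan_nf (pb (fst y) (snd y) t) bs \<and> (\<forall>x\<in>set bs. fst x = 1 \<and> (\<exists>i<fst y. snd x = snd y + t * of_nat i))"
    using pb_jnf[OF t] by blast
  then obtain f where f: "\<And>y. y \<in> set L \<Longrightarrow> jordan_nf (pb (fst y) (snd y) t) (f y) \<and> (\<forall>x\<in>set (f y). fst x = 1 \<and> (\<exists>i<fst y. snd x = snd y + t * of_nat i))"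
    by metis
  define Ms where "Ms = map (\<lambda>y. (pb (fst y) (snd y) t, f y)) L"
  have "jordan_nf (diag_block_mat (map fst Ms)) (concat (map snd Ms))"
    by (rule jordan_nf_diag_block_mat) (auto simp: Ms_def dest: f)
  moreover have "diag_block_mat (map fst Ms) = Jt L t"
    unfolding Ms_def Jt_def by (simp add: case_prod_unfold o_def)
  moreover have "\<forall>x\<in>set (concat (map snd Ms)). fst x = 1 \<and> (\<exists>y\<in>set L. \<exists>i<fst y. snd x = snd y + t * of_nat i)"
  proof
    fix x assume "x \<in> set (concat (map snd Ms))"
    then obtain y where y: "y \<in> set L" and xy: "x \<in> set (f y)" unfolding Ms_def by auto
    from f[OF y] xy show "fst x = 1 \<and> (\<exists>y\<in>set L. \<exists>i<fst y. snd x = snd y + t * of_nat i)"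
      using y by blast
  qed
  ultimately show ?thesis by metis
qed



lemma polyfun_affine:
  assumes f: "f \<in> mat_polyfun n" and A: "A \<in> carrier_mat n n" and C: "C \<in> carrier_mat n n"
  shows "\<exists>p. \<forall>t. f (A + t \<cdot>\<^sub>m C) = poly p t"
  using f
proof (induct rule: mat_polyfun.induct)
  case (const c)
  show ?case by (rule exI[of _ "[:c:]"]) simp
next
  case (entry i j)
  show ?case by (rule exI[of _ "[:A $$ (i,j), C $$ (i,j):]"]) (use entry A C in \<open>auto simp: algebra_simps\<close>)
next
  case (add f g)
  then obtain p q where "\<forall>t. f (A + t \<cdot>\<^sub>m C) = poly p t" "\<forall>t. g (A + t \<cdot>\<^sub>m C) = poly q t" by blast
  then show ?case by (intro exI[of _ "p + q"]) simp
next
  case (mult f g)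
  then obtain p q where "\<forall>t. f (A + t \<cdot>\<^sub>m C) = poly p t" "\<forall>t. g (A + t \<cdot>\<^sub>m C) = poly q t" by blast
  then show ?case by (intro exI[of _ "p * q"]) simp
qed

lemma sum_count_le_size: "finite E \<Longrightarrow> (\<Sum>a\<in>E. count M a) \<le> size M"
proof (induct M)
  case empty then show ?case by simp
next
  case (add x M)
  have "(\<Sum>a\<in>E. count (add_mset x M) a) = (\<Sum>a\<in>E. count M a) + (\<Sum>a\<in>E. if a = x then 1 else 0)"
    unfolding sum.distrib[symmetric] by (rule sum.cong) auto
  also have "(\<Sum>a\<in>E. if a = x then 1 else (0::nat)) \<le> 1"
    using add.prems by (simp add: sum.delta)
  finally show ?case using add by simp
qed

lemma sum_order_le_degree:
  fixes p :: "complex poly"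
  assumes p: "p \<noteq> 0" and E: "finite E"
  shows "(\<Sum>a\<in>E. order a p) \<le> degree p"
proof -
  have "(\<Sum>a\<in>E. order a p) = (\<Sum>a\<in>E. count (proots p) a)" using p by simp
  also have "\<dots> \<le> size (proots p)" by (rule sum_count_le_size[OF E])
  also have "\<dots> = degree p" by (rule size_proots_complex)
  finally show ?thesis .
qed

lemma dvd_prod_list_mem: "x \<in> set xs \<Longrightarrow> x dvd prod_list (xs :: 'a :: comm_monoid_mult list)"
  by (induct xs) auto



theorem proposition2p1:
  fixes n k :: nat
  assumes "n \<ge> 2" and "k < n"
  shows "zariski_dense_in n {A \<in> mats_k n k. diagonalizable A} (mats_k n k)"
proof -
  let ?S = "{A \<in> mats_k n k. diagonalizable A}"
  have main: "A \<in> zariski_closure n ?S" if AX: "A \<in> mats_k n k" for A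
  proof -
    have A: "A \<in> carrier_mat n n" and dA: "degree (min_poly A) \<le> n - k"
      using AX unfolding mats_k_def by auto
    from char_poly_factorized[OF A] obtain as where "char_poly A = (\<Prod>a\<leftarrow>as. [:- a, 1:])" by blast
    from jordan_nf_exists[OF A this] obtain L where jnf: "jordan_nf A L" by blast
    let ?J = "jordan_matrix L"
    let ?N = "sum_list (map fst L)"
    have simAJ: "similar_mat A ?J" and L0: "0 \<notin> fst ` set L" using jnf unfolding jordan_nf_def by auto
    from similar_matD[OF simAJ] obtain n' P Q where
      c: "{A, ?J, P, Q} \<subseteq> carrier_mat n' n'" and PQ: "P * Q = 1\<^sub>m n'" and QP: "Q * P = 1\<^sub>m n'"
      and AJ: "A = P * ?J * Q" by blast
    have n': "n' = n" using c A by auto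
    have Nn: "?N = n" using c n' by auto
    have P: "P \<in> carrier_mat n n" and Q: "Q \<in> carrier_mat n n" using c n' by auto
    have PQ': "P * Q = 1\<^sub>m n" and QP': "Q * P = 1\<^sub>m n" using PQ QP n' by auto
    have Jtc: "Jt L t \<in> carrier_mat n n" for t using Jt_carrier[of L t] Nn by simp
    define E where "E = Jt L 1 - Jt L 0"
    have Ec: "E \<in> carrier_mat n n" unfolding E_def using Jtc by (intro minus_carrier_mat)
    define C where "C = P * E * Q"
    have Cc: "C \<in> carrier_mat n n" unfolding C_def using P Q Ec by auto
    define M where "M = (\<lambda>t. A + t \<cdot>\<^sub>m C)"
    have Mc: "M t \<in> carrier_mat n n" for t unfolding M_def using A Cc by auto
    have Jt_eq: "Jt L t = Jt L 0 + t \<cdot>\<^sub>m E" for t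
      by (rule eq_matI) (use Jtc Ec Nn in \<open>auto simp: E_def Jt_affine[of _ L _ t]\<close>)
    have M_eq: "M t = P * Jt L t * Q" for t
    proof -
      have "P * Jt L t * Q = P * (Jt L 0 + t \<cdot>\<^sub>m E) * Q" by (subst Jt_eq[of t], rule refl)
      also have "P * (Jt L 0 + t \<cdot>\<^sub>m E) = P * Jt L 0 + P * (t \<cdot>\<^sub>m E)"
        using P Jtc Ec by (intro mult_add_distrib_mat[of P n n _ n]) auto
      also have "(P * Jt L 0 + P * (t \<cdot>\<^sub>m E)) * Q = P * Jt L 0 * Q + P * (t \<cdot>\<^sub>m E) * Q"
        using P Jtc Ec Q by (intro add_mult_distrib_mat[of _ n n _ Q n]) auto
      also have "P * (t \<cdot>\<^sub>m E) * Q = t \<cdot>\<^sub>m C"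
        unfolding C_def using P Ec Q
        by (simp add: mult_smult_distrib[of P n n E n] mult_smult_assoc_mat[of _ n n Q n])
      also have "P * Jt L 0 * Q = A" using AJ by (simp add: Jt_0)
      finally show ?thesis unfolding M_def by simp
    qed
    have simMJ: "similar_mat (M t) (Jt L t)" for t
      by (rule similar_matI[of _ _ P Q n]) (use Mc Jtc P Q PQ' QP' M_eq in auto)
    define q0 where "q0 = (\<Prod>(m,a)\<leftarrow>L. [:-a,1:] ^ m)"
    have q0nz: "q0 \<noteq> 0" unfolding q0_def by (auto simp: prod_list_zero_iff)
    have "poly_mat q0 ?J = 0\<^sub>m ?N ?N"
      unfolding poly_mat_jordan_matrix_zero poly_mat_jordan_block_zero_iff
    proof (intro ballI, clarify)
      fix m a assume "(m,a) \<in> set L"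
      then have "[:-a,1:] ^ m \<in> set (map (\<lambda>(m,a). [:-a,1:] ^ m) L)" by force
      then show "[:-a,1:] ^ m dvd q0" unfolding q0_def by (rule dvd_prod_list_mem)
    qed
    then have "poly_mat q0 A = 0\<^sub>m n n"
      using poly_mat_similar_zero[OF simAJ] A by simp
    from min_poly_exists[OF A q0nz this] have ism: "is_min_poly A (min_poly A)" by simp
    define mA where "mA = min_poly A"
    have mA1: "lead_coeff mA = 1" and mA0: "poly_mat mA A = 0\<^sub>m n n"
      using ism A unfolding mA_def is_min_poly_def by auto
    have mAnz: "mA \<noteq> 0" using mA1 by auto
    have "poly_mat mA ?J = 0\<^sub>m ?N ?N"
      using poly_mat_similar_zero[OF similar_mat_sym[OF simAJ]] mA0 A by simp
    then have blk: "\<And>m a. (m,a) \<in> set L \<Longrightarrow> m \<le> order a mA"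
      unfolding poly_mat_jordan_matrix_zero poly_mat_jordan_block_zero_iff order_divides
      using mAnz by auto
    define Ev where "Ev = snd ` set L"
    define s where "s = (\<lambda>a. Max (fst ` {y \<in> set L. snd y = a}))"
    have fEv: "finite Ev" unfolding Ev_def by simp
    have s_ge: "fst y \<le> s (snd y)" if "y \<in> set L" for y
      unfolding s_def using that by (intro Max_ge) auto
    have s_le: "s a \<le> order a mA" if "a \<in> Ev" for a
    proof -
      have ne: "fst ` {y \<in> set L. snd y = a} \<noteq> {}" using that unfolding Ev_def by auto
      show ?thesis unfolding s_def using blk ne by (subst Max_le_iff) force+
    qed
    have sumS: "(\<Sum>a\<in>Ev. s a) \<le> n - k"
    proof -
      have "(\<Sum>a\<in>Ev. s a) \<le> (\<Sum>a\<in>Ev. order a mA)" by (rule sum_mono) (rule s_le)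
      also have "\<dots> \<le> degree mA" by (rule sum_order_le_degree[OF mAnz fEv])
      finally show ?thesis using dA unfolding mA_def by simp
    qed
    have MS: "M t \<in> ?S" if t: "t \<noteq> 0" for t
    proof -
      from Jt_jnf[OF t, of L] obtain cs where jc: "jordan_nf (Jt L t) cs"
        and cs: "\<forall>x\<in>set cs. fst x = 1 \<and> (\<exists>y\<in>set L. \<exists>i<fst y. snd x = snd y + t * of_nat i)" by blast
      let ?D = "jordan_matrix cs"
      have diagD: "diagonal_mat ?D" using cs by (intro jordan_matrix_diagonal) auto
      have simMD: "similar_mat (M t) ?D"
        using similar_mat_trans[OF simMJ] jc unfolding jordan_nf_def by blast
      define R where "R = (\<lambda>(a,i). a + t * of_nat i) ` (SIGMA a:Ev. {..<s a})"
      have fR: "finite R" unfolding R_def using fEv by auto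
      define q where "q = (\<Prod>x\<in>R. [:-x,1:])"
      have qnz: "q \<noteq> 0" unfolding q_def using fR by auto
      have dq: "degree q = card R" unfolding q_def
        by (subst degree_prod_sum_eq) auto
      have "card R \<le> card (SIGMA a:Ev. {..<s a})" unfolding R_def by (rule card_image_le) (use fEv in auto)
      also have "\<dots> = (\<Sum>a\<in>Ev. s a)" using fEv by simp
      finally have cardR: "card R \<le> n - k" using sumS by simp
      have "poly_mat q ?D = 0\<^sub>m (sum_list (map fst cs)) (sum_list (map fst cs))"
        unfolding poly_mat_jordan_matrix_zero poly_mat_jordan_block_zero_iff
      proof (intro ballI, clarify)
        fix m c assume mc: "(m,c) \<in> set cs"
        from bspec[OF cs mc] have m1: "m = 1" and "\<exists>y\<in>set L. \<exists>i<fst y. c = snd y + t * of_nat i" by auto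
        then obtain y i where y: "y \<in> set L" and i: "i < fst y" and ceq: "c = snd y + t * of_nat i" by blast
        have "i < s (snd y)" using s_ge[OF y] i by simp
        then have "c \<in> R" unfolding R_def ceq Ev_def using y by force
        then have "[:-c,1:] dvd q" unfolding q_def using fR by (intro dvd_prodI[OF fR])
        then show "[:-c,1:] ^ m dvd q" using m1 by simp
      qed
      then have qM: "poly_mat q (M t) = 0\<^sub>m n n"
        using poly_mat_similar_zero[OF simMD] Mc[of t] by simp
      have "degree (min_poly (M t)) \<le> degree q" by (rule min_poly_exists(2)[OF Mc qnz qM])
      then have deg: "degree (min_poly (M t)) \<le> n - k" using dq cardR by simp
      from similar_matD[OF simMD] obtain n2 P2 Q2 where "{M t, ?D, P2, Q2} \<subseteq> carrier_mat n2 n2" by blast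
      then have "?D \<in> carrier_mat (dim_row (M t)) (dim_row (M t))" by auto
      then have "diagonalizable (M t)" unfolding diagonalizable_def using diagD simMD by blast
      then show ?thesis unfolding mats_k_def using Mc deg by auto
    qed
    show ?thesis unfolding zariski_closure_def
    proof (intro InterI, clarify)
      fix Z assume Zc: "zariski_closed n Z" and SZ: "?S \<subseteq> Z"
      from Zc obtain F where F: "F \<subseteq> mat_polyfun n" and Zeq: "Z = {B \<in> carrier_mat n n. \<forall>f\<in>F. f B = 0}"
        unfolding zariski_closed_def by blast
      have "\<forall>f\<in>F. f A = 0"
      proof
        fix f assume fF: "f \<in> F"
        from polyfun_affine[OF subsetD[OF F fF] A Cc] obtain p where p: "\<And>t. f (A + t \<cdot>\<^sub>m C) = poly p t" by blast
        have vanish: "poly p t = 0" if "t \<noteq> 0" for t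
        proof -
          have "M t \<in> Z" using MS[OF that] SZ by blast
          then have "f (M t) = 0" using fF Zeq by auto
          then show ?thesis using p unfolding M_def by simp
        qed
        have "p = 0"
        proof (rule ccontr)
          assume "p \<noteq> 0"
          then have "finite {t. poly p t = 0}" by (rule poly_roots_finite)
          moreover have "UNIV - {0} \<subseteq> {t. poly p t = 0}" using vanish by auto
          ultimately have "finite (UNIV - {0::complex})" by (rule finite_subset[rotated])
          then show False by (simp add: infinite_UNIV_char_0)
        qed
        moreover have "A + 0 \<cdot>\<^sub>m C = A" using A Cc by (intro eq_matI) auto
        ultimately show "f A = 0" using p[of 0] by simp
      qed
      then show "A \<in> Z" using Zeq A by auto
    qed
  qed
  show ?thesis unfolding zariski_dense_in_def using main by blast
qed

end
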